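(* Let $N\ge1$, let $(X_j)_{j\in\mathbb{N}}$ be an i.i.d. sequence of random vectors uniformly distributed on the unit sphere $S^{N-1}\subset\mathbb{R}^N$, and set $Y_n=\sum_{j=1}^n n^{-1/2}X_j$. Let $C\ge \sqrt{\frac{2}{N}}\sqrt{\frac{1}{1-(1/2)^{2/N}}}$. Then the family of random variables $\big(\exp(\|Y_n\|^2/C^2)\big)_{n\in\mathbb{N}}$ is uniformly integrable.
   Context: $\|\cdot\|$ denotes the Euclidean norm on $\mathbb{R}^N$. *)

theory Defs
  imports "HOL-Probability.Probability"
begin

text \<open>Normalized (uniform) surface measure on the unit sphere of a Euclidean space,
  defined as the cone measure: the push-forward of the uniform distribution on the
  unit ball under radial projection x \<mapsto> x / norm x, i.e.
  sigma(A) = lambda {t x. 0 < t \<le> 1, x \<in> A} / lambda (ball 0 1).\<close>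
definition sphere_unif :: "'a::euclidean_space measure" where
  "sphere_unif = distr (uniform_measure lborel (ball 0 1)) borel (\<lambda>x. x /\<^sub>R norm x)"

definition uniformly_integrable :: "'a measure \<Rightarrow> ('i \<Rightarrow> 'a \<Rightarrow> real) \<Rightarrow> bool" where
  "uniformly_integrable M f \<longleftrightarrow>
     (\<forall>i. integrable M (f i)) \<and>
     (\<forall>e>0. \<exists>K. \<forall>i.
        (\<integral>\<^sup>+ x. ennreal (indicator {y. K < \<bar>f i y\<bar>} x * \<bar>f i x\<bar>) \<partial>M) < ennreal e)"

end

theory Submission
  imports Defs
begin


lemma g_nn_1: "(\<integral>\<^sup>+y. ennreal (std_normal_density y) \<partial>lborel) = 1"
  by (subst nn_integral_eq_integral) auto

lemma g_nn_2: "(\<integral>\<^sup>+y. ennreal (y^2 * std_normal_density y) \<partial>lborel) = 1"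
proof -
  have "has_bochner_integral lborel (\<lambda>x. std_normal_density x * x ^ (2 * 1)) (fact (2 * 1) / (2^1 * fact 1))"
    by (rule std_normal_moment_even)
  then have h: "has_bochner_integral lborel (\<lambda>x. x^2 * std_normal_density x) 1"
    by (simp add: mult.commute)
  show ?thesis
    using h by (subst nn_integral_eq_integral) (auto simp: has_bochner_integral_iff)
qed

lemma g_nn_mgf: "(\<integral>\<^sup>+y. ennreal (exp (t*y) * std_normal_density y) \<partial>lborel) = ennreal (exp (t^2/2))"
proof -
  have e: "exp (t*y) * std_normal_density y = exp (t^2/2) * std_normal_density (-t + y)" for y
  proof -
    have "t*y + - (y^2/2) = t^2/2 + - ((-t+y)^2/2)" by (simp add: power2_eq_square field_simps)
    then show ?thesis by (simp add: std_normal_density_def exp_add[symmetric])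
  qed
  have "(\<integral>\<^sup>+y. ennreal (exp (t*y) * std_normal_density y) \<partial>lborel)
      = ennreal (exp (t^2/2)) * (\<integral>\<^sup>+y. ennreal (std_normal_density (-t + y)) \<partial>lborel)"
    by (simp add: e ennreal_mult nn_integral_cmult)
  also have "(\<integral>\<^sup>+y. ennreal (std_normal_density (-t + y)) \<partial>lborel) = 1"
    using nn_integral_real_affine[of "\<lambda>y. ennreal (std_normal_density y)" 1 "-t"] g_nn_1 by simp
  finally show ?thesis by simp
qed

lemma g_nn_sq: assumes "\<beta> < 1/2"
  shows "(\<integral>\<^sup>+y. ennreal (exp (\<beta>*y^2) * std_normal_density y) \<partial>lborel) = ennreal (1 / sqrt (1 - 2*\<beta>))"
proof -
  define s where "s = sqrt (1 - 2*\<beta>)"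
  have s: "s > 0" using assms by (simp add: s_def)
  have ss: "s^2 = 1 - 2*\<beta>" using assms by (simp add: s_def)
  have e: "exp (\<beta>*y^2) * std_normal_density y = std_normal_density (0 + s * y)" for y
  proof -
    have "\<beta>*y^2 + - (y^2/2) = - ((s*y)^2/2)" proof -
      have "(s*y)^2 = (1-2*\<beta>)*y^2" by (simp add: power_mult_distrib ss)
      then show ?thesis by (simp only: ) (simp add: field_simps)
    qed
    then show ?thesis by (simp add: std_normal_density_def exp_add[symmetric])
  qed
  have "1 = (\<integral>\<^sup>+y. ennreal (std_normal_density y) \<partial>lborel)" using g_nn_1 by simp
  also have "\<dots> = ennreal s * (\<integral>\<^sup>+y. ennreal (std_normal_density (0 + s * y)) \<partial>lborel)"
    using nn_integral_real_affine[of "\<lambda>y. ennreal (std_normal_density y)" s 0] s by simp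
  finally have one: "1 = ennreal s * (\<integral>\<^sup>+y. ennreal (std_normal_density (0 + s * y)) \<partial>lborel)" .
  have k: "ennreal (1/s) * ennreal s = 1" using s by (simp add: ennreal_mult[symmetric])
  have "(\<integral>\<^sup>+y. ennreal (std_normal_density (0 + s * y)) \<partial>lborel)
     = (ennreal (1/s) * ennreal s) * (\<integral>\<^sup>+y. ennreal (std_normal_density (0 + s * y)) \<partial>lborel)"
    by (simp only: k mult_1_left)
  also have "\<dots> = ennreal (1/s) * (ennreal s * (\<integral>\<^sup>+y. ennreal (std_normal_density (0 + s * y)) \<partial>lborel))"
    by (simp only: mult.assoc)
  also have "\<dots> = ennreal (1/s)" by (simp only: one[symmetric] mult_1_right)
  finally have "(\<integral>\<^sup>+y. ennreal (std_normal_density (0 + s * y)) \<partial>lborel) = ennreal (1/s)" .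
  then show ?thesis by (simp add: e s_def)
qed



definition gam :: "'a::euclidean_space \<Rightarrow> real" where
  "gam x = (\<Prod>b\<in>Basis. std_normal_density (x \<bullet> b))"

lemma norm_sq_sum: "(norm (x::'a::euclidean_space))^2 = (\<Sum>b\<in>Basis. (x \<bullet> b)^2)"
proof -
  have "(norm x)^2 = x \<bullet> x" by (rule power2_norm_eq_inner)
  also have "\<dots> = (\<Sum>b\<in>Basis. (x \<bullet> b)^2)" by (subst euclidean_inner) (simp add: power2_eq_square)
  finally show ?thesis .
qed

lemma gam_nonneg: "0 \<le> gam x"
  by (simp add: gam_def prod_nonneg)

lemma gam_eq: "gam (x::'a::euclidean_space) = (1 / sqrt (2*pi))^DIM('a) * exp (- ((norm x)^2 / 2))"
proof -
  have "(norm x)^2 = (\<Sum>b\<in>Basis. (x \<bullet> b)^2)"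
    by (rule norm_sq_sum)
  then have "exp (- ((norm x)^2 / 2)) = (\<Prod>b\<in>Basis. exp (- ((x \<bullet> b)^2/2)))"
    by (simp add: exp_sum[symmetric] sum_negf sum_divide_distrib)
  moreover have "(\<Prod>b\<in>(Basis::'a set). exp (- ((x \<bullet> b)\<^sup>2 / 2)) / sqrt (2 * pi)) =
     (\<Prod>b\<in>Basis. exp (- ((x \<bullet> b)\<^sup>2 / 2))) / (sqrt (2 * pi)) ^ DIM('a)"
    by (simp add: prod_dividef)
  ultimately show ?thesis
    by (simp add: gam_def std_normal_density_def power_one_over)
qed

lemma borel_gam[measurable]: "gam \<in> borel_measurable borel"
  unfolding gam_def by measurable

lemma nD_1: "(\<integral>\<^sup>+x. ennreal (gam (x::'a::euclidean_space)) \<partial>lborel) = 1"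
proof -
  have "(\<integral>\<^sup>+x. ennreal (gam (x::'a)) \<partial>lborel) = (\<integral>\<^sup>+x. (\<Prod>b\<in>Basis. ennreal (std_normal_density ((x::'a) \<bullet> b))) \<partial>lborel)"
    by (simp add: gam_def prod_ennreal)
  also have "\<dots> = (\<Prod>b\<in>(Basis::'a set). (\<integral>\<^sup>+y. ennreal (std_normal_density y) \<partial>lborel))"
    by (rule nn_integral_lborel_prod) auto
  finally show ?thesis by (simp add: g_nn_1)
qed

lemma nD_mgf: "(\<integral>\<^sup>+x. ennreal (exp (v \<bullet> x) * gam (x::'a::euclidean_space)) \<partial>lborel) = ennreal (exp ((norm v)^2/2))"
proof -
  have eq: "exp (v \<bullet> x) * gam x = (\<Prod>b\<in>Basis. exp ((v\<bullet>b) * (x \<bullet> b)) * std_normal_density (x \<bullet> b))" for x :: 'a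
    by (simp add: gam_def prod.distrib euclidean_inner[of v x] exp_sum)
  have "(\<integral>\<^sup>+x. ennreal (exp (v \<bullet> x) * gam (x::'a)) \<partial>lborel) = (\<integral>\<^sup>+x. (\<Prod>b\<in>Basis. ennreal (exp ((v\<bullet>b) * ((x::'a) \<bullet> b)) * std_normal_density (x \<bullet> b))) \<partial>lborel)"
    by (simp add: eq prod_ennreal)
  also have "\<dots> = (\<Prod>b\<in>(Basis::'a set). (\<integral>\<^sup>+y. ennreal (exp ((v\<bullet>b) * y) * std_normal_density y) \<partial>lborel))"
    by (rule nn_integral_lborel_prod) auto
  also have "\<dots> = (\<Prod>b\<in>(Basis::'a set). ennreal (exp ((v\<bullet>b)^2/2)))"
    by (simp add: g_nn_mgf)
  also have "\<dots> = ennreal (exp ((norm v)^2/2))"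
  proof -
    have "(norm v)^2 = (\<Sum>b\<in>Basis. (v \<bullet> b)^2)"
      by (rule norm_sq_sum)
    then show ?thesis
      by (simp add: prod_ennreal exp_sum[symmetric] sum_divide_distrib)
  qed
  finally show ?thesis .
qed

lemma nD_sq: assumes "\<beta> < 1/2"
  shows "(\<integral>\<^sup>+x. ennreal (exp (\<beta> * (norm x)^2) * gam (x::'a::euclidean_space)) \<partial>lborel) = ennreal ((1 / sqrt (1 - 2*\<beta>))^DIM('a))"
proof -
  have eq: "exp (\<beta> * (norm x)^2) * gam x = (\<Prod>b\<in>Basis. exp (\<beta> * (x \<bullet> b)^2) * std_normal_density (x \<bullet> b))" for x :: 'a
  proof -
    have "(norm x)^2 = (\<Sum>b\<in>Basis. (x \<bullet> b)^2)"
      by (rule norm_sq_sum)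
    then show ?thesis by (simp add: gam_def prod.distrib exp_sum sum_distrib_left)
  qed
  have "(\<integral>\<^sup>+x. ennreal (exp (\<beta> * (norm x)^2) * gam (x::'a)) \<partial>lborel) = (\<integral>\<^sup>+x. (\<Prod>b\<in>Basis. ennreal (exp (\<beta> * ((x::'a) \<bullet> b)^2) * std_normal_density (x \<bullet> b))) \<partial>lborel)"
    by (simp add: eq prod_ennreal)
  also have "\<dots> = (\<Prod>b\<in>(Basis::'a set). (\<integral>\<^sup>+y. ennreal (exp (\<beta> * y^2) * std_normal_density y) \<partial>lborel))"
    by (rule nn_integral_lborel_prod) auto
  also have "\<dots> = (\<Prod>b\<in>(Basis::'a set). ennreal (1 / sqrt (1 - 2*\<beta>)))"
    using g_nn_sq[OF assms] by simp
  also have "\<dots> = ennreal ((1 / sqrt (1 - 2*\<beta>))^DIM('a))"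
    using assms by (simp only: prod_constant) (rule ennreal_power, simp)
  finally show ?thesis .
qed

lemma g_nn_if: "(\<integral>\<^sup>+y. ennreal ((if P then y^2 else 1) * std_normal_density y) \<partial>lborel) = 1"
  by (cases P) (simp_all add: g_nn_1 g_nn_2)

lemma nD_2: "(\<integral>\<^sup>+x. ennreal ((norm x)^2 * gam (x::'a::euclidean_space)) \<partial>lborel) = DIM('a)"
proof -
  have eq: "(norm x)^2 * gam x = (\<Sum>c\<in>Basis. (\<Prod>b\<in>Basis. (if b = c then (x\<bullet>b)^2 else 1) * std_normal_density (x \<bullet> b)))" for x :: 'a
  proof -
    have "(norm x)^2 = (\<Sum>b\<in>Basis. (x \<bullet> b)^2)"
      by (rule norm_sq_sum)
    moreover have "(\<Prod>b\<in>Basis. (if b = c then (x\<bullet>b)^2 else 1) * std_normal_density (x \<bullet> b)) = (x\<bullet>c)^2 * gam x"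
      if "c \<in> Basis" for c
      using that by (simp add: gam_def prod.distrib prod.delta)
    ultimately show ?thesis by (simp add: sum_distrib_right)
  qed
  have "(\<integral>\<^sup>+x. ennreal ((norm x)^2 * gam (x::'a)) \<partial>lborel)
     = (\<Sum>c\<in>(Basis::'a set). (\<integral>\<^sup>+x. (\<Prod>b\<in>Basis. ennreal ((if b = c then (x\<bullet>b)^2 else 1) * std_normal_density ((x::'a) \<bullet> b))) \<partial>lborel))"
  proof -
    have eq2: "ennreal ((norm x)^2 * gam x) = (\<Sum>c\<in>Basis. \<Prod>b\<in>Basis. ennreal ((if b = c then (x\<bullet>b)^2 else 1) * std_normal_density (x \<bullet> b)))" for x :: 'a
    proof -
      have nn: "0 \<le> (if b = c then (x\<bullet>b)^2 else 1) * std_normal_density (x \<bullet> b)" for b c :: 'a by simp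
      have "ennreal ((norm x)^2 * gam x) = (\<Sum>c\<in>Basis. ennreal (\<Prod>b\<in>Basis. (if b = c then (x\<bullet>b)^2 else 1) * std_normal_density (x \<bullet> b)))"
        unfolding eq by (rule sum_ennreal[symmetric]) (simp add: prod_nonneg nn)
      also have "\<dots> = (\<Sum>c\<in>Basis. \<Prod>b\<in>Basis. ennreal ((if b = c then (x\<bullet>b)^2 else 1) * std_normal_density (x \<bullet> b)))"
        by (rule sum.cong[OF refl], rule prod_ennreal[symmetric]) (simp add: nn)
      finally show ?thesis .
    qed
    show ?thesis unfolding eq2 by (rule nn_integral_sum) auto
  qed
  also have "\<dots> = (\<Sum>c\<in>(Basis::'a set). (\<Prod>b\<in>(Basis::'a set). (\<integral>\<^sup>+y. ennreal ((if b = c then y^2 else 1) * std_normal_density y) \<partial>lborel)))"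
    by (intro sum.cong refl nn_integral_lborel_prod) auto
  also have "\<dots> = (\<Sum>c\<in>(Basis::'a set). 1)"
    by (intro sum.cong refl prod.neutral) (simp add: g_nn_if)
  finally show ?thesis by simp
qed





lemma V_eq: "emeasure lborel (ball (0::'a::euclidean_space) 1) = ennreal (unit_ball_vol (DIM('a)))"
  by (simp add: emeasure_ball)

lemma V_pos: "unit_ball_vol (DIM('a::euclidean_space)) > 0" by simp

lemma lborel_scale:
  fixes S :: "'a::euclidean_space set"
  assumes r: "r > 0" and S: "S \<in> sets borel"
  shows "emeasure lborel S = ennreal (r^DIM('a)) * emeasure lborel ((\<lambda>x. r *\<^sub>R x) -` S)"
proof -
  have eq: "lborel = density (distr lborel borel (\<lambda>x. (0::'a) + r *\<^sub>R x)) (\<lambda>_. \<bar>r\<bar>^DIM('a))"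
    using lborel_affine[of r "0::'a"] r by simp
  have "emeasure lborel S = emeasure (density (distr lborel borel (\<lambda>x. (0::'a) + r *\<^sub>R x)) (\<lambda>_. \<bar>r\<bar>^DIM('a))) S"
    by (rule arg_cong[where f="\<lambda>M. emeasure M S", OF eq])
  also have "\<dots> = ennreal (r^DIM('a)) * emeasure lborel ((\<lambda>x. r *\<^sub>R x) -` S)"
    using S r by (simp add: emeasure_density_const emeasure_distr)
  finally show ?thesis .
qed

lemma sn_scale: "r > 0 \<Longrightarrow> (r *\<^sub>R x) /\<^sub>R norm (r *\<^sub>R x) = x /\<^sub>R norm x"
  by (cases "x = 0") auto

lemma T_scale:
  fixes A :: "'a::euclidean_space set"
  assumes r: "r > 0" and A: "A \<in> sets borel"
  shows "emeasure lborel {x. x /\<^sub>R norm x \<in> A \<and> norm x < r} = ennreal (r^DIM('a)) * emeasure lborel {x. x /\<^sub>R norm x \<in> A \<and> norm x < 1}"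
proof -
  have "(\<lambda>x. r *\<^sub>R x) -` {x. x /\<^sub>R norm x \<in> A \<and> norm x < r} = {x::'a. x /\<^sub>R norm x \<in> A \<and> norm x < 1}"
  proof -
    have "((r *\<^sub>R x) /\<^sub>R norm (r *\<^sub>R x) \<in> A \<and> norm (r *\<^sub>R x) < r) \<longleftrightarrow> (x /\<^sub>R norm x \<in> A \<and> norm x < 1)" for x :: 'a
      unfolding sn_scale[OF r] using r by simp
    then show ?thesis by (simp only: set_eq_iff vimage_def mem_Collect_eq) simp
  qed
  moreover have "{x::'a. x /\<^sub>R norm x \<in> A \<and> norm x < r} \<in> sets borel"
    using A by measurable
  ultimately show ?thesis using lborel_scale[OF r, of "{x::'a. x /\<^sub>R norm x \<in> A \<and> norm x < r}"] by simp
qed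

lemma sn_meas[measurable]: "(\<lambda>x::'a::euclidean_space. x /\<^sub>R norm x) \<in> borel_measurable borel"
  by measurable

lemma sn_vimage: "A \<in> sets borel \<Longrightarrow> (\<lambda>x::'a::euclidean_space. x /\<^sub>R norm x) -` A \<in> sets borel"
  using measurable_sets[OF sn_meas, of A] by simp

lemma sphere_unif_emeasure:
  fixes A :: "'a::euclidean_space set"
  assumes A: "A \<in> sets borel"
  shows "emeasure sphere_unif A = emeasure lborel {x. x /\<^sub>R norm x \<in> A \<and> norm x < 1} / ennreal (unit_ball_vol (DIM('a)))"
proof -
  have m: "(\<lambda>x::'a. x /\<^sub>R norm x) \<in> measurable (uniform_measure lborel (ball 0 1)) borel"
    by measurable
  have "emeasure sphere_unif A = emeasure (uniform_measure lborel (ball 0 1)) ((\<lambda>x::'a. x /\<^sub>R norm x) -` A)"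
    unfolding sphere_unif_def using A m by (simp add: emeasure_distr)
  also have "\<dots> = emeasure lborel (ball 0 1 \<inter> (\<lambda>x::'a. x /\<^sub>R norm x) -` A) / emeasure lborel (ball (0::'a) 1)"
    using A by (intro emeasure_uniform_measure) (auto intro: sn_vimage)
  also have "ball 0 1 \<inter> (\<lambda>x::'a. x /\<^sub>R norm x) -` A = {x. x /\<^sub>R norm x \<in> A \<and> norm x < 1}"
    by auto
  finally show ?thesis by (simp add: V_eq)
qed



lemma sets_borel_lessThan: "sets (borel::real measure) = sigma_sets UNIV (range lessThan)"
  by (subst borel_Iio) (rule sets_measure_of, simp)

lemma radial_meq:
  fixes A :: "'a::euclidean_space set" assumes A: "A \<in> sets borel"
  shows "distr (density lborel (indicator {x::'a. x /\<^sub>R norm x \<in> A})) borel norm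
       = density (distr (lborel::'a measure) borel norm) (\<lambda>_. emeasure sphere_unif A)"
proof -
  let ?S = "{x::'a. x /\<^sub>R norm x \<in> A}"
  have S: "?S \<in> sets borel" using A by measurable
  let ?T = "{x::'a. x /\<^sub>R norm x \<in> A \<and> norm x < 1}"
  have nlt: "{x::'a. norm x < r} \<in> sets borel" for r by measurable
  have key: "emeasure (distr (density lborel (indicator ?S)) borel norm) {..<r}
       = emeasure (density (distr (lborel::'a measure) borel norm) (\<lambda>_. emeasure sphere_unif A)) {..<r}" for r :: real
  proof -
    have L: "emeasure (distr (density lborel (indicator ?S)) borel norm) {..<r} = emeasure lborel (?S \<inter> {x. norm x < r})"
      using S nlt by (simp add: emeasure_distr emeasure_restricted vimage_def)
    have R: "emeasure (density (distr (lborel::'a measure) borel norm) (\<lambda>_. emeasure sphere_unif A)) {..<r}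
        = emeasure sphere_unif A * emeasure lborel {x::'a. norm x < r}"
      using nlt by (simp add: emeasure_density_const emeasure_distr vimage_def)
    show ?thesis
    proof (cases "r > 0")
      case False
      then have "{x::'a. norm x < r} = {}" by auto (meson norm_ge_zero order_le_less_trans)
      then show ?thesis using L R by simp
    next
      case True
      have e1: "?S \<inter> {x. norm x < r} = {x::'a. x /\<^sub>R norm x \<in> A \<and> norm x < r}" by auto
      have e2: "{x::'a. norm x < r} = ball 0 r" by auto
      have "emeasure lborel (?S \<inter> {x. norm x < r}) = ennreal (r^DIM('a)) * emeasure lborel ?T"
        unfolding e1 by (rule T_scale[OF True A])
      also have "emeasure lborel ?T = emeasure sphere_unif A * ennreal (unit_ball_vol DIM('a))"
      proof -
        have p: "0 < unit_ball_vol (real DIM('a))" by (rule unit_ball_vol_pos) simp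
        have c0: "ennreal (unit_ball_vol (real DIM('a))) \<noteq> 0" by (metis p ennreal_eq_0_iff not_le)
        have c1: "ennreal (unit_ball_vol (real DIM('a))) < top" by simp
        show ?thesis using sphere_unif_emeasure[OF A]
          by (simp add: ennreal_divide_times ennreal_divide_self[OF c0 c1])
      qed
      also have "ennreal (r^DIM('a)) * (emeasure sphere_unif A * ennreal (unit_ball_vol DIM('a)))
               = emeasure sphere_unif A * emeasure lborel {x::'a. norm x < r}"
        unfolding e2 using True
        by (simp add: emeasure_ball ennreal_mult[symmetric] mult_ac)
      finally show ?thesis using L R by simp
    qed
  qed
  show ?thesis
  proof (rule measure_eqI_generator_eq[where \<Omega>=UNIV and E="range lessThan" and A="\<lambda>i. {..<real i}"])
    show "Int_stable (range lessThan :: real set set)"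
      unfolding Int_stable_def
    proof (clarify)
      fix a b :: real
      have "{..<a} \<inter> {..<b} = {..<min a b}" by auto
      then show "{..<a} \<inter> {..<b} \<in> range lessThan" by blast
    qed
    show "range lessThan \<subseteq> Pow (UNIV::real set)" by simp
    show "\<And>X. X \<in> range lessThan \<Longrightarrow> emeasure (distr (density lborel (indicator ?S)) borel norm) X = emeasure (density (distr (lborel::'a measure) borel norm) (\<lambda>_. emeasure sphere_unif A)) X"
      using key by auto
    show "sets (distr (density lborel (indicator ?S)) borel norm) = sigma_sets UNIV (range lessThan)"
      by (simp add: sets_borel_lessThan)
    show "sets (density (distr (lborel::'a measure) borel norm) (\<lambda>_. emeasure sphere_unif A)) = sigma_sets UNIV (range lessThan)"
      by (simp add: sets_borel_lessThan)
    show "range (\<lambda>i. {..<real i}) \<subseteq> range lessThan" by auto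
    show "(\<Union>i. {..<real i}) = UNIV" by (auto intro: reals_Archimedean2)
    show "emeasure (distr (density lborel (indicator ?S)) borel norm) {..<real i} \<noteq> \<infinity>" for i
    proof -
      have "emeasure (distr (density lborel (indicator ?S)) borel norm) {..<real i} = emeasure lborel (?S \<inter> {x. norm x < real i})"
        using S nlt by (simp add: emeasure_distr emeasure_restricted vimage_def)
      also have "\<dots> \<le> emeasure lborel (ball (0::'a) (real i))"
        by (intro emeasure_mono) auto
      finally show ?thesis using emeasure_lborel_ball_finite[of "0::'a" "real i"] by (auto simp: top_unique)
    qed
  qed
qed



lemma polar_ind:
  fixes A :: "'a::euclidean_space set" and h :: "real \<Rightarrow> ennreal"
  assumes A: "A \<in> sets borel" and h[measurable]: "h \<in> borel_measurable borel"
  shows "(\<integral>\<^sup>+x. indicator {x::'a. x /\<^sub>R norm x \<in> A} x * h (norm x) \<partial>lborel)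
       = emeasure sphere_unif A * (\<integral>\<^sup>+x. h (norm (x::'a)) \<partial>lborel)"
proof -
  let ?S = "{x::'a. x /\<^sub>R norm x \<in> A}"
  have S[measurable]: "?S \<in> sets borel" using A by measurable
  have "(\<integral>\<^sup>+x. indicator ?S x * h (norm x) \<partial>lborel) = (\<integral>\<^sup>+x. h (norm x) \<partial>density lborel (indicator ?S))"
    by (simp add: nn_integral_density)
  also have "\<dots> = (\<integral>\<^sup>+y. h y \<partial>distr (density lborel (indicator ?S)) borel norm)"
    by (simp add: nn_integral_distr)
  also have "\<dots> = (\<integral>\<^sup>+y. h y \<partial>density (distr (lborel::'a measure) borel norm) (\<lambda>_. emeasure sphere_unif A))"
    by (simp add: radial_meq[OF A])
  also have "\<dots> = emeasure sphere_unif A * (\<integral>\<^sup>+x. h (norm (x::'a)) \<partial>lborel)"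
    by (simp add: nn_integral_density nn_integral_distr nn_integral_cmult)
  finally show ?thesis .
qed

lemma sets_sphere_unif[simp, measurable_cong]: "sets (sphere_unif::'a::euclidean_space measure) = sets borel"
  by (simp add: sphere_unif_def)

lemma polar_prod:
  fixes \<phi> :: "'a::euclidean_space \<Rightarrow> ennreal" and h :: "real \<Rightarrow> ennreal"
  assumes [measurable]: "\<phi> \<in> borel_measurable borel" "h \<in> borel_measurable borel"
  shows "(\<integral>\<^sup>+x. \<phi> (x /\<^sub>R norm x) * h (norm x) \<partial>lborel)
       = (\<integral>\<^sup>+u. \<phi> u \<partial>sphere_unif) * (\<integral>\<^sup>+x. h (norm (x::'a)) \<partial>lborel)"
proof -
  let ?H = "\<integral>\<^sup>+x. h (norm (x::'a)) \<partial>lborel"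
  have eq: "distr (density lborel (\<lambda>x. h (norm (x::'a)))) borel (\<lambda>x. x /\<^sub>R norm x)
        = density sphere_unif (\<lambda>_. ?H)"
  proof (rule measure_eqI)
    show "sets (distr (density lborel (\<lambda>x. h (norm (x::'a)))) borel (\<lambda>x. x /\<^sub>R norm x)) = sets (density sphere_unif (\<lambda>_. ?H))"
      by simp
    fix A assume "A \<in> sets (distr (density lborel (\<lambda>x. h (norm (x::'a)))) borel (\<lambda>x. x /\<^sub>R norm x))"
    then have A[measurable]: "A \<in> sets borel" by simp
    have "emeasure (distr (density lborel (\<lambda>x. h (norm (x::'a)))) borel (\<lambda>x. x /\<^sub>R norm x)) A
        = (\<integral>\<^sup>+x. indicator {x::'a. x /\<^sub>R norm x \<in> A} x * h (norm x) \<partial>lborel)"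
      by (simp add: emeasure_distr emeasure_density vimage_def mult.commute)
    also have "\<dots> = emeasure sphere_unif A * ?H" by (rule polar_ind[OF A]) simp
    also have "\<dots> = emeasure (density sphere_unif (\<lambda>_. ?H)) A"
      by (simp add: emeasure_density_const mult.commute)
    finally show "emeasure (distr (density lborel (\<lambda>x. h (norm (x::'a)))) borel (\<lambda>x. x /\<^sub>R norm x)) A = emeasure (density sphere_unif (\<lambda>_. ?H)) A" .
  qed
  have "(\<integral>\<^sup>+x. \<phi> (x /\<^sub>R norm x) * h (norm x) \<partial>lborel)
      = (\<integral>\<^sup>+u. \<phi> u \<partial>distr (density lborel (\<lambda>x. h (norm (x::'a)))) borel (\<lambda>x. x /\<^sub>R norm x))"
    by (simp add: nn_integral_distr nn_integral_density mult.commute)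
  also have "\<dots> = (\<integral>\<^sup>+u. \<phi> u \<partial>density sphere_unif (\<lambda>_. ?H))" by (simp only: eq)
  also have "\<dots> = (\<integral>\<^sup>+u. \<phi> u \<partial>sphere_unif) * ?H"
    apply (simp add: nn_integral_density mult.commute)
    apply (rule nn_integral_multc)
    apply measurable
    done
  finally show ?thesis .
qed



lemma nn_integral_lborel_neg:
  fixes f :: "'a::euclidean_space \<Rightarrow> ennreal"
  assumes [measurable]: "f \<in> borel_measurable borel"
  shows "(\<integral>\<^sup>+x. f (- x) \<partial>lborel) = (\<integral>\<^sup>+x. f x \<partial>lborel)"
proof -
  have eq: "lborel = density (distr lborel borel (\<lambda>x. (0::'a) + (-1) *\<^sub>R x)) (\<lambda>_. \<bar>-1::real\<bar>^DIM('a))"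
    using lborel_affine[of "-1::real" "0::'a"] by simp
  have "(\<integral>\<^sup>+x. f x \<partial>lborel) = (\<integral>\<^sup>+x. f x \<partial>density (distr lborel borel (\<lambda>x. (0::'a) + (-1) *\<^sub>R x)) (\<lambda>_. \<bar>-1::real\<bar>^DIM('a)))"
    by (rule arg_cong[where f="\<lambda>M. \<integral>\<^sup>+x. f x \<partial>M", OF eq])
  also have "\<dots> = (\<integral>\<^sup>+x. f (- x) \<partial>lborel)"
    by (simp add: nn_integral_density nn_integral_distr)
  finally show ?thesis ..
qed

lemma sphere_unif_sym:
  fixes \<phi> :: "'a::euclidean_space \<Rightarrow> ennreal"
  assumes [measurable]: "\<phi> \<in> borel_measurable borel"
  shows "(\<integral>\<^sup>+u. \<phi> (- u) \<partial>sphere_unif) = (\<integral>\<^sup>+u. \<phi> u \<partial>sphere_unif)"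
proof -
  let ?h = "\<lambda>s::real. indicator {..<1} s :: ennreal"
  let ?H = "\<integral>\<^sup>+x. ?h (norm (x::'a)) \<partial>lborel"
  have H: "?H = emeasure lborel (ball (0::'a) 1)"
  proof -
    have "(\<lambda>x. ?h (norm (x::'a))) = indicator (ball 0 1)" by (auto simp: fun_eq_iff split: split_indicator)
    then show ?thesis by simp
  qed
  have p: "0 < unit_ball_vol (real DIM('a))" by (rule unit_ball_vol_pos) simp
  have H0: "?H \<noteq> 0" unfolding H V_eq by (metis p ennreal_eq_0_iff not_le)
  have Ht: "?H \<noteq> top" unfolding H V_eq by simp
  have "(\<integral>\<^sup>+u. \<phi> (- u) \<partial>sphere_unif) * ?H = (\<integral>\<^sup>+x. \<phi> (- (x /\<^sub>R norm x)) * ?h (norm x) \<partial>lborel)"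
    by (rule polar_prod[symmetric]) auto
  also have "\<dots> = (\<integral>\<^sup>+x. (\<lambda>x. \<phi> (x /\<^sub>R norm x) * ?h (norm x)) (- x) \<partial>lborel)"
    by simp
  also have "\<dots> = (\<integral>\<^sup>+x. \<phi> (x /\<^sub>R norm x) * ?h (norm x) \<partial>lborel)"
    by (rule nn_integral_lborel_neg) measurable
  also have "\<dots> = (\<integral>\<^sup>+u. \<phi> u \<partial>sphere_unif) * ?H"
    by (rule polar_prod) auto
  finally have "(\<integral>\<^sup>+u. \<phi> (- u) \<partial>sphere_unif) * ?H = (\<integral>\<^sup>+u. \<phi> u \<partial>sphere_unif) * ?H" .
  then show ?thesis using H0 Ht by (metis ennreal_mult_divide_eq)
qed

lemma bern_pt:
  fixes y c :: real and j :: nat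
  assumes y: "0 \<le> y" and c: "0 < c"
  shows "c^j + real j * c^(j-1) * y \<le> y^j + real j * c^j"
proof -
  have "1 + real j * (y/c - 1) \<le> (1 + (y/c - 1))^j"
    by (rule Bernoulli_inequality) (use y c in simp)
  then have "1 + real j * (y/c - 1) \<le> (y/c)^j" by simp
  then have "c^j * (1 + real j * (y/c - 1)) \<le> c^j * (y/c)^j"
    using c by (intro mult_left_mono) auto
  moreover have "c^j * (y/c)^j = y^j" using c by (simp add: power_divide)
  moreover have "c^j * (1 + real j * (y/c - 1)) = c^j + real j * c^(j-1) * y - real j * c^j"
  proof (cases j)
    case 0 then show ?thesis by simp
  next
    case (Suc k)
    then show ?thesis using c by (simp add: field_simps)
  qed
  ultimately show ?thesis by linarith
qed

lemma nD_2': "(\<integral>\<^sup>+x. ennreal ((norm x)^2) * ennreal (gam (x::'a::euclidean_space)) \<partial>lborel) = ennreal (real DIM('a))"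
proof -
  have "(\<integral>\<^sup>+x. ennreal ((norm x)^2) * ennreal (gam (x::'a)) \<partial>lborel) = (\<integral>\<^sup>+x. ennreal ((norm x)^2 * gam (x::'a)) \<partial>lborel)"
    by (simp add: ennreal_mult gam_nonneg)
  also have "\<dots> = ennreal (real DIM('a))" by (simp add: nD_2 ennreal_of_nat_eq_real_of_nat)
  finally show ?thesis .
qed

lemma gauss_moment_lb:
  "(\<integral>\<^sup>+x. ennreal ((norm x)^(2*j) * gam (x::'a::euclidean_space)) \<partial>lborel) \<ge> ennreal (real DIM('a) ^ j)"
proof -
  define c where "c = real DIM('a)"
  have c: "0 < c" by (simp add: c_def)
  let ?M = "\<integral>\<^sup>+x. ennreal ((norm x)^(2*j) * gam (x::'a)) \<partial>lborel"
  have pt: "ennreal (c^j * gam x) + ennreal (real j * c^(j-1) * ((norm x)^2 * gam x))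
      \<le> ennreal ((norm x)^(2*j) * gam x) + ennreal (real j * c^j * gam x)" for x :: 'a
  proof -
    have b: "c^j + real j * c^(j-1) * (norm x)^2 \<le> (norm x)^(2*j) + real j * c^j"
      using bern_pt[of "(norm x)^2" c j] c by (simp add: power_mult)
    have "(c^j + real j * c^(j-1) * (norm x)^2) * gam x \<le> ((norm x)^(2*j) + real j * c^j) * gam x"
      by (intro mult_right_mono b) (auto simp: gam_nonneg)
    then have "c^j * gam x + real j * c^(j-1) * ((norm x)^2 * gam x) \<le> (norm x)^(2*j) * gam x + real j * c^j * gam x"
      by (simp add: algebra_simps)
    then show ?thesis
      using c gam_nonneg[of x]
      by (simp add: ennreal_plus[symmetric] del: ennreal_plus)
  qed
  have "(\<integral>\<^sup>+x. ennreal (c^j * gam (x::'a)) + ennreal (real j * c^(j-1) * ((norm x)^2 * gam x)) \<partial>lborel)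
     \<le> (\<integral>\<^sup>+x. ennreal ((norm x)^(2*j) * gam (x::'a)) + ennreal (real j * c^j * gam x) \<partial>lborel)"
    by (rule nn_integral_mono) (rule pt)
  also have "\<dots> = ?M + ennreal (real j * c^j)"
    using c by (subst nn_integral_add) (auto simp: ennreal_mult nn_integral_cmult nD_1 gam_nonneg)
  also have "(\<integral>\<^sup>+x. ennreal (c^j * gam (x::'a)) + ennreal (real j * c^(j-1) * ((norm x)^2 * gam x)) \<partial>lborel)
      = ennreal (c^j) + ennreal (real j * c^j)"
  proof -
    have "(\<integral>\<^sup>+x. ennreal (c^j * gam (x::'a)) + ennreal (real j * c^(j-1) * ((norm x)^2 * gam x)) \<partial>lborel)
      = ennreal (c^j) + ennreal (real j * c^(j-1)) * ennreal c"
      using c by (subst nn_integral_add) (auto simp: ennreal_mult nn_integral_cmult nD_1 nD_2' gam_nonneg c_def)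
    also have "ennreal (real j * c^(j-1)) * ennreal c = ennreal (real j * c^j)"
    proof (cases j)
      case 0 then show ?thesis by simp
    next
      case (Suc k) then show ?thesis using c by (simp add: ennreal_mult[symmetric])
    qed
    finally show ?thesis .
  qed
  finally have "ennreal (real j * c^j) + ennreal (c^j) \<le> ennreal (real j * c^j) + ?M"
    by (simp add: add.commute)
  then show ?thesis unfolding c_def by (simp add: ennreal_add_left_cancel_le)
qed



lemma cosh_half: "cosh (t::real) = exp t / 2 + exp (-t) / 2"
  by (simp add: cosh_def field_simps)

lemma ennreal_cosh_split:
  assumes "0 \<le> g"
  shows "ennreal (cosh (t::real) * g) = ennreal (1/2) * ennreal (exp t * g) + ennreal (1/2) * ennreal (exp (-t) * g)"
proof -
  have eq: "cosh t * g = (1/2) * (exp t * g) + (1/2) * (exp (-t) * g)" by (simp add: cosh_half algebra_simps)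
  have n1: "0 \<le> (1/2) * (exp t * g)" "0 \<le> (1/2) * (exp (-t) * g)" "0 \<le> exp t * g" "0 \<le> exp (-t) * g" "0 \<le> (1/2::real)"
    using assms by auto
  show ?thesis unfolding eq by (simp only: ennreal_plus[OF n1(1) n1(2)] ennreal_mult[OF n1(5) n1(3)] ennreal_mult[OF n1(5) n1(4)])
qed

lemma half_half: "ennreal (1/2) * a + ennreal (1/2) * a = a"
proof -
  have "ennreal (1/2) * a + ennreal (1/2) * a = (ennreal (1/2) + ennreal (1/2)) * a"
    by (simp add: distrib_right)
  also have "ennreal (1/2) + ennreal (1/2) = 1"
  proof -
    have "ennreal (1/2) + ennreal (1/2) = ennreal (1/2 + 1/2)" by (rule ennreal_plus[symmetric]) auto
    then show ?thesis by simp
  qed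
  finally show ?thesis by simp
qed

lemma gauss_cosh:
  "(\<integral>\<^sup>+x. ennreal (cosh (v \<bullet> x) * gam (x::'a::euclidean_space)) \<partial>lborel) = ennreal (exp ((norm v)^2/2))"
proof -
  have "(\<integral>\<^sup>+x. ennreal (cosh (v \<bullet> x) * gam (x::'a)) \<partial>lborel)
     = (\<integral>\<^sup>+x. ennreal (1/2) * ennreal (exp (v \<bullet> x) * gam x) + ennreal (1/2) * ennreal (exp ((-v) \<bullet> x) * gam x) \<partial>lborel)"
    by (simp add: ennreal_cosh_split gam_nonneg)
  also have "\<dots> = ennreal (1/2) * (\<integral>\<^sup>+x. ennreal (exp (v \<bullet> x) * gam (x::'a)) \<partial>lborel)
       + ennreal (1/2) * (\<integral>\<^sup>+x. ennreal (exp ((-v) \<bullet> x) * gam (x::'a)) \<partial>lborel)"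
    by (subst nn_integral_add) (auto simp: nn_integral_cmult)
  also have "\<dots> = ennreal (exp ((norm v)^2/2))"
    by (simp only: nD_mgf norm_minus_cancel half_half)
  finally show ?thesis .
qed

definition cs :: "nat \<Rightarrow> real \<Rightarrow> real" where
  "cs n t = (if even n then t^n / fact n else 0)"

lemma cs_nonneg: "0 \<le> cs n t"
  by (simp add: cs_def zero_le_even_power)

lemma cs_sums: "(\<lambda>n. cs n t) sums cosh t"
proof -
  have "(\<lambda>n. if even n then t ^ n /\<^sub>R fact n else 0) = (\<lambda>n. cs n t)"
    by (rule ext) (simp add: cs_def divide_inverse mult.commute)
  then show ?thesis using cosh_converges[of t] by simp
qed

lemma ennreal_cosh_series:
  assumes "0 \<le> g"
  shows "ennreal (cosh t * g) = (\<Sum>n. ennreal (cs n t * g))"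
proof -
  have "(\<lambda>n. cs n t * g) sums (cosh t * g)" by (rule sums_mult2[OF cs_sums])
  then show ?thesis using assms by (intro suminf_ennreal_eq[symmetric]) (auto simp: cs_nonneg)
qed

lemma gam_radial: "gam (x::'a::euclidean_space) = (1 / sqrt (2*pi))^DIM('a) * exp (- ((norm x)^2 / 2))"
  by (rule gam_eq)

lemma inner_polar: "v \<bullet> x = norm x * (v \<bullet> (x /\<^sub>R norm x))"
  by (cases "x = 0") auto

lemma term_bound:
  fixes v :: "'a::euclidean_space"
  shows "(\<integral>\<^sup>+u. ennreal (cs n (sqrt (real DIM('a)) * (v \<bullet> u))) \<partial>sphere_unif)
    \<le> (\<integral>\<^sup>+x. ennreal (cs n (v \<bullet> x) * gam (x::'a)) \<partial>lborel)"
proof (cases "even n")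
  case False then show ?thesis by (simp add: cs_def)
next
  case True
  then obtain j where n: "n = 2*j" by blast
  define G where "G = (\<lambda>s::real. (1 / sqrt (2*pi))^DIM('a) * exp (- (s^2 / 2)))"
  have G: "gam x = G (norm x)" for x :: 'a by (simp add: G_def gam_eq)
  have Gnn: "0 \<le> G s" for s by (simp add: G_def)
  have Gm[measurable]: "G \<in> borel_measurable borel" unfolding G_def by measurable
  let ?\<phi> = "\<lambda>u::'a. ennreal ((v \<bullet> u)^n)"
  let ?h = "\<lambda>s::real. ennreal (s^n * G s / fact n)"
  have pt: "ennreal (cs n (v \<bullet> x) * gam x) = ?\<phi> (x /\<^sub>R norm x) * ?h (norm x)" for x :: 'a
  proof -
    have eqr: "cs n (v \<bullet> x) * gam x = (v \<bullet> (x /\<^sub>R norm x))^n * ((norm x)^n * G (norm x) / fact n)"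
      using True by (subst inner_polar) (simp add: cs_def G power_mult_distrib)
    have h1: "0 \<le> (v \<bullet> (x /\<^sub>R norm x))^n" using n by (simp add: power_mult zero_le_power2)
    have h2: "0 \<le> (norm x)^n * G (norm x) / fact n" using Gnn by simp
    show ?thesis by (simp only: eqr ennreal_mult[OF h1 h2])
  qed
  have "(\<integral>\<^sup>+x. ennreal (cs n (v \<bullet> x) * gam (x::'a)) \<partial>lborel) = (\<integral>\<^sup>+x. ?\<phi> (x /\<^sub>R norm x) * ?h (norm x) \<partial>lborel)"
    by (simp only: pt)
  also have "\<dots> = (\<integral>\<^sup>+u. ?\<phi> u \<partial>sphere_unif) * (\<integral>\<^sup>+x. ?h (norm (x::'a)) \<partial>lborel)"
    by (rule polar_prod) (simp_all add: G_def)
  also have "(\<integral>\<^sup>+x. ?h (norm (x::'a)) \<partial>lborel) = (\<integral>\<^sup>+x. ennreal ((norm x)^(2*j) * gam (x::'a)) \<partial>lborel) * ennreal (1 / fact n)"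
    by (subst nn_integral_multc[symmetric]) (auto simp: G n ennreal_mult[symmetric] Gnn intro!: nn_integral_cong)
  finally have eq: "(\<integral>\<^sup>+x. ennreal (cs n (v \<bullet> x) * gam (x::'a)) \<partial>lborel)
     = (\<integral>\<^sup>+u. ?\<phi> u \<partial>sphere_unif) * ((\<integral>\<^sup>+x. ennreal ((norm x)^(2*j) * gam (x::'a)) \<partial>lborel) * ennreal (1 / fact n))" .
  have "(\<integral>\<^sup>+u. ennreal (cs n (sqrt (real DIM('a)) * (v \<bullet> u))) \<partial>sphere_unif)
      = (\<integral>\<^sup>+u. ?\<phi> u * (ennreal (real DIM('a) ^ j) * ennreal (1 / fact n)) \<partial>sphere_unif)"
  proof (rule nn_integral_cong)
    fix u :: 'a
    have "cs n (sqrt (real DIM('a)) * (v \<bullet> u)) = (v \<bullet> u)^n * (real DIM('a) ^ j * (1 / fact n))"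
      using True by (simp add: cs_def n power_mult_distrib power_mult)
    moreover have h1: "0 \<le> (v \<bullet> u)^n" using n by (simp add: power_mult zero_le_power2)
    moreover have h2: "0 \<le> real DIM('a) ^ j" "0 \<le> 1 / (fact n :: real)" by auto
    ultimately show "ennreal (cs n (sqrt (real DIM('a)) * (v \<bullet> u))) = ?\<phi> u * (ennreal (real DIM('a) ^ j) * ennreal (1 / fact n))"
      by (simp only: ennreal_mult[OF h2] ennreal_mult[OF h1 mult_nonneg_nonneg[OF h2]])
  qed
  also have "\<dots> = (\<integral>\<^sup>+u. ?\<phi> u \<partial>sphere_unif) * (ennreal (real DIM('a) ^ j) * ennreal (1 / fact n))"
    by (rule nn_integral_multc) simp
  also have "\<dots> \<le> (\<integral>\<^sup>+u. ?\<phi> u \<partial>sphere_unif) * ((\<integral>\<^sup>+x. ennreal ((norm x)^(2*j) * gam (x::'a)) \<partial>lborel) * ennreal (1 / fact n))"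
    by (intro mult_left_mono mult_right_mono gauss_moment_lb) auto
  finally show ?thesis using eq by simp
qed

lemma sphere_cosh_bound:
  fixes v :: "'a::euclidean_space"
  shows "(\<integral>\<^sup>+u. ennreal (cosh (sqrt (real DIM('a)) * (v \<bullet> u))) \<partial>sphere_unif) \<le> ennreal (exp ((norm v)^2/2))"
proof -
  have "(\<integral>\<^sup>+u. ennreal (cosh (sqrt (real DIM('a)) * (v \<bullet> u))) \<partial>sphere_unif)
      = (\<integral>\<^sup>+u. (\<Sum>n. ennreal (cs n (sqrt (real DIM('a)) * (v \<bullet> u)))) \<partial>sphere_unif)"
    using ennreal_cosh_series[of 1] by simp
  also have "\<dots> = (\<Sum>n. (\<integral>\<^sup>+u. ennreal (cs n (sqrt (real DIM('a)) * (v \<bullet> u))) \<partial>sphere_unif))"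
    by (rule nn_integral_suminf) (simp add: cs_def)
  also have "\<dots> \<le> (\<Sum>n. (\<integral>\<^sup>+x. ennreal (cs n (v \<bullet> x) * gam (x::'a)) \<partial>lborel))"
    by (intro suminf_le term_bound) auto
  also have "\<dots> = (\<integral>\<^sup>+x. (\<Sum>n. ennreal (cs n (v \<bullet> x) * gam (x::'a))) \<partial>lborel)"
    by (rule nn_integral_suminf[symmetric]) (simp add: cs_def)
  also have "\<dots> = (\<integral>\<^sup>+x. ennreal (cosh (v \<bullet> x) * gam (x::'a)) \<partial>lborel)"
    by (simp add: ennreal_cosh_series gam_nonneg)
  also have "\<dots> = ennreal (exp ((norm v)^2/2))" by (rule gauss_cosh)
  finally show ?thesis .
qed

lemma sphere_mgf:
  fixes w :: "'a::euclidean_space"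
  shows "(\<integral>\<^sup>+u. ennreal (exp (w \<bullet> u)) \<partial>sphere_unif) \<le> ennreal (exp ((norm w)^2 / (2 * real DIM('a))))"
proof -
  define c where "c = sqrt (real DIM('a))"
  have c: "c > 0" by (simp add: c_def)
  define v where "v = w /\<^sub>R c"
  have wv: "c * (v \<bullet> u) = w \<bullet> u" for u using c by (simp add: v_def)
  have nv: "(norm v)^2 / 2 = (norm w)^2 / (2 * real DIM('a))"
  proof -
    have "norm v = norm w / c" using c by (simp add: v_def divide_inverse mult.commute)
    then have "(norm v)^2 = (norm w)^2 / c^2" by (simp add: power_divide)
    moreover have "c^2 = real DIM('a)" by (simp add: c_def)
    ultimately show ?thesis by simp
  qed
  have sym: "(\<integral>\<^sup>+u. ennreal (exp (-(w \<bullet> u))) \<partial>sphere_unif) = (\<integral>\<^sup>+u. ennreal (exp (w \<bullet> u)) \<partial>sphere_unif)"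
    using sphere_unif_sym[of "\<lambda>u. ennreal (exp (w \<bullet> u))"] by simp
  have "(\<integral>\<^sup>+u. ennreal (cosh (w \<bullet> u)) \<partial>sphere_unif)
     = (\<integral>\<^sup>+u. ennreal (1/2) * ennreal (exp (w \<bullet> u)) + ennreal (1/2) * ennreal (exp (-(w \<bullet> u))) \<partial>sphere_unif)"
    using ennreal_cosh_split[of 1] by simp
  also have "\<dots> = ennreal (1/2) * (\<integral>\<^sup>+u. ennreal (exp (w \<bullet> u)) \<partial>sphere_unif) + ennreal (1/2) * (\<integral>\<^sup>+u. ennreal (exp (-(w \<bullet> u))) \<partial>sphere_unif)"
    by (subst nn_integral_add) (auto simp: nn_integral_cmult)
  also have "\<dots> = (\<integral>\<^sup>+u. ennreal (exp (w \<bullet> u)) \<partial>sphere_unif)"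
    by (simp only: sym half_half)
  finally have "(\<integral>\<^sup>+u. ennreal (exp (w \<bullet> u)) \<partial>sphere_unif) = (\<integral>\<^sup>+u. ennreal (cosh (c * (v \<bullet> u))) \<partial>sphere_unif)"
    by (simp add: wv)
  also have "\<dots> \<le> ennreal (exp ((norm v)^2/2))"
    unfolding c_def by (rule sphere_cosh_bound)
  finally show ?thesis by (simp only: nv)
qed



lemma key_bound:
  fixes M :: "'b measure" and X :: "nat \<Rightarrow> 'b \<Rightarrow> 'a::euclidean_space" and a :: real
  assumes P: "prob_space M" and indep: "prob_space.indep_vars M (\<lambda>_. borel) X UNIV"
    and dist: "\<And>j. distr M borel (X j) = sphere_unif" and a: "0 \<le> a" "a / real DIM('a) < 1/2"
  shows "(\<integral>\<^sup>+\<omega>. ennreal (exp (a * (norm (\<Sum>j\<in>{1..n}. (1 / sqrt (real n)) *\<^sub>R X j \<omega>))\<^sup>2)) \<partial>M)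
     \<le> ennreal ((1 / sqrt (1 - 2*(a / real DIM('a))))^DIM('a))"
proof -
  interpret prob_space M by (rule P)
  interpret PS: pair_sigma_finite M "lborel :: 'a measure" proof qed
  have Xm[measurable]: "X j \<in> borel_measurable M" for j
    using indep unfolding indep_vars_def2 by auto
  define c where "c = sqrt (2*a)"
  define d where "d = c / sqrt (real n)"
  define Y where "Y = (\<lambda>\<omega>. \<Sum>j\<in>{1..n}. (1 / sqrt (real n)) *\<^sub>R X j \<omega>)"
  have Ym[measurable]: "Y \<in> borel_measurable M" unfolding Y_def by measurable
  let ?F = "\<lambda>\<omega> (g::'a). ennreal (exp ((c *\<^sub>R Y \<omega>) \<bullet> g) * gam g)"
  have step1: "ennreal (exp (a * (norm (Y \<omega>))\<^sup>2)) = (\<integral>\<^sup>+g. ?F \<omega> g \<partial>lborel)" for \<omega>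
  proof -
    have "(norm (c *\<^sub>R Y \<omega>))^2 / 2 = a * (norm (Y \<omega>))\<^sup>2"
      using a by (simp add: c_def power_mult_distrib)
    then show ?thesis using nD_mgf[of "c *\<^sub>R Y \<omega>"] by simp
  qed
  have "(\<integral>\<^sup>+\<omega>. ennreal (exp (a * (norm (Y \<omega>))\<^sup>2)) \<partial>M) = (\<integral>\<^sup>+\<omega>. (\<integral>\<^sup>+g. ?F \<omega> g \<partial>lborel) \<partial>M)"
    by (simp only: step1)
  also have "\<dots> = (\<integral>\<^sup>+g. (\<integral>\<^sup>+\<omega>. ?F \<omega> g \<partial>M) \<partial>lborel)"
    by (rule PS.Fubini'[symmetric]) measurable
  also have "\<dots> \<le> (\<integral>\<^sup>+g. ennreal (exp ((a / real DIM('a)) * (norm g)^2) * gam (g::'a)) \<partial>lborel)"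
  proof (rule nn_integral_mono)
    fix g :: 'a
    let ?Z = "\<lambda>j \<omega>. ennreal (exp (d * (X j \<omega> \<bullet> g)))"
    have Fprod: "?F \<omega> g = ennreal (gam g) * (\<Prod>j\<in>{1..n}. ?Z j \<omega>)" for \<omega>
    proof -
      have "(c *\<^sub>R Y \<omega>) \<bullet> g = (\<Sum>j\<in>{1..n}. d * (X j \<omega> \<bullet> g))"
        by (simp add: Y_def d_def inner_sum_left sum_distrib_left)
      then have "exp ((c *\<^sub>R Y \<omega>) \<bullet> g) = (\<Prod>j\<in>{1..n}. exp (d * (X j \<omega> \<bullet> g)))" by (simp add: exp_sum)
      then show ?thesis by (simp add: prod_ennreal ennreal_mult' gam_nonneg mult.commute)
    qed
    have ind: "indep_vars (\<lambda>_. borel) ?Z {1..n}"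
    proof -
      have "indep_vars (\<lambda>_. borel) X {1..n}" using indep by (rule indep_vars_subset) simp
      then show ?thesis by (rule indep_vars_compose2[where X=X]) measurable
    qed
    have "(\<integral>\<^sup>+\<omega>. ?F \<omega> g \<partial>M) = ennreal (gam g) * (\<integral>\<^sup>+\<omega>. (\<Prod>j\<in>{1..n}. ?Z j \<omega>) \<partial>M)"
      by (simp only: Fprod) (rule nn_integral_cmult, measurable)
    also have "(\<integral>\<^sup>+\<omega>. (\<Prod>j\<in>{1..n}. ?Z j \<omega>) \<partial>M) = (\<Prod>j\<in>{1..n}. \<integral>\<^sup>+\<omega>. ?Z j \<omega> \<partial>M)"
      using indep_vars_nn_integral[OF _ ind] by simp
    also have "\<dots> \<le> (\<Prod>j\<in>{1..n}. ennreal (exp ((norm (d *\<^sub>R g))^2 / (2 * real DIM('a)))))"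
    proof (rule prod_mono_ennreal)
      fix j assume "j \<in> {1..n}"
      have "(\<integral>\<^sup>+\<omega>. ?Z j \<omega> \<partial>M) = (\<integral>\<^sup>+u. ennreal (exp ((d *\<^sub>R g) \<bullet> u)) \<partial>distr M borel (X j))"
        by (simp add: nn_integral_distr inner_commute)
      also have "\<dots> = (\<integral>\<^sup>+u. ennreal (exp ((d *\<^sub>R g) \<bullet> u)) \<partial>sphere_unif)" by (simp add: dist)
      also have "\<dots> \<le> ennreal (exp ((norm (d *\<^sub>R g))^2 / (2 * real DIM('a))))" by (rule sphere_mgf)
      finally show "(\<integral>\<^sup>+\<omega>. ?Z j \<omega> \<partial>M) \<le> ennreal (exp ((norm (d *\<^sub>R g))^2 / (2 * real DIM('a))))" .
    qed
    also have "\<dots> = ennreal (exp (real n * ((norm (d *\<^sub>R g))^2 / (2 * real DIM('a)))))"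
    proof -
      have "(\<Prod>j\<in>{1..n}. ennreal (exp ((norm (d *\<^sub>R g))^2 / (2 * real DIM('a)))))
          = ennreal (exp ((norm (d *\<^sub>R g))^2 / (2 * real DIM('a))) ^ n)"
        by (simp add: prod_constant ennreal_power)
      also have "exp ((norm (d *\<^sub>R g))^2 / (2 * real DIM('a))) ^ n = exp (real n * ((norm (d *\<^sub>R g))^2 / (2 * real DIM('a))))"
        by (rule exp_of_nat_mult[symmetric])
      finally show ?thesis .
    qed
    also have "\<dots> \<le> ennreal (exp ((a / real DIM('a)) * (norm g)^2))"
    proof -
      have hn: "real n * d^2 \<le> 2 * a"
      proof (cases "n = 0")
        case True then show ?thesis using a by simp
      next
        case False then show ?thesis using a by (simp add: d_def c_def power_divide)
      qed
      then have "real n * ((norm (d *\<^sub>R g))^2 / (2 * real DIM('a))) \<le> (a / real DIM('a)) * (norm g)^2"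
      proof -
        have h2: "real n * d^2 * (norm g)^2 \<le> 2*a*(norm g)^2" using hn by (rule mult_right_mono) simp
        have e1: "real n * ((norm (d *\<^sub>R g))^2 / (2 * real DIM('a))) = (real n * d^2 * (norm g)^2) / (2 * real DIM('a))"
          by (simp add: power_mult_distrib)
        have e2: "(a / real DIM('a)) * (norm g)^2 = (2*a*(norm g)^2) / (2 * real DIM('a))" by simp
        show ?thesis unfolding e1 e2 by (rule divide_right_mono[OF h2]) simp
      qed
      then show ?thesis by simp
    qed
    finally show "(\<integral>\<^sup>+\<omega>. ?F \<omega> g \<partial>M) \<le> ennreal (exp ((a / real DIM('a)) * (norm g)^2) * gam g)"
      using gam_nonneg[of g] by (simp add: ennreal_mult mult.commute mult_right_mono)
  qed
  also have "\<dots> = ennreal ((1 / sqrt (1 - 2*(a / real DIM('a))))^DIM('a))"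
    by (rule nD_sq) (use a in simp)
  finally show ?thesis unfolding Y_def .
qed



theorem mainTheorem2:
  fixes M :: "'b measure" and X :: "nat \<Rightarrow> 'b \<Rightarrow> 'a::euclidean_space" and C :: real
  assumes "prob_space M"
    and "prob_space.indep_vars M (\<lambda>_. borel) X UNIV"
    and "\<And>j. distr M borel (X j) = sphere_unif"
    and "C \<ge> sqrt (2 / real DIM('a)) * sqrt (1 / (1 - (1/2) powr (2 / real DIM('a))))"
  shows "uniformly_integrable M
           (\<lambda>n \<omega>. exp ((norm (\<Sum>j\<in>{1..n}. (1 / sqrt (real n)) *\<^sub>R X j \<omega>))\<^sup>2 / C\<^sup>2))"
proof -
  interpret prob_space M by (rule assms(1))
  have Xm[measurable]: "X j \<in> borel_measurable M" for j
    using assms(2) unfolding indep_vars_def2 by auto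
  define Nr where "Nr = real DIM('a)"
  have Np: "Nr > 0" by (simp add: Nr_def)
  define q where "q = (1/2::real) powr (2 / Nr)"
  have q1: "q < 1"
  proof -
    have "(1/2::real) powr (2 / Nr) < 1 powr (2 / Nr)"
      by (rule powr_less_mono2) (use Np in auto)
    then show ?thesis by (simp add: q_def)
  qed
  have q0: "0 < q" by (simp add: q_def)
  have s1: "sqrt (1 / (1 - q)) > 1"
  proof -
    have "1 / (1 - q) > 1" using q0 q1 by (simp add: field_simps)
    then show ?thesis by simp
  qed
  have s2: "sqrt (2 / Nr) > 0" using Np by simp
  have Cge: "C \<ge> sqrt (2 / Nr) * sqrt (1 / (1 - q))" using assms(4) by (simp add: Nr_def q_def)
  have "sqrt (2 / Nr) * 1 < sqrt (2 / Nr) * sqrt (1 / (1 - q))"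
    by (rule mult_strict_left_mono[OF s1 s2])
  then have Cgt: "sqrt (2 / Nr) < C" using Cge by simp
  then have Cp: "C > 0" using s2 by linarith
  have C2: "2 / Nr < C^2"
  proof -
    have "(sqrt (2 / Nr))^2 < C^2" by (rule power_strict_mono[OF Cgt]) (use s2 in auto)
    then show ?thesis using Np by simp
  qed
  have NC: "1 < Nr * C^2 / 2" using C2 Np by (simp add: field_simps)
  define p where "p = (1 + Nr * C^2 / 2) / 2"
  have p1: "1 < p" using NC by (simp add: p_def)
  have pN: "p < Nr * C^2 / 2" using NC by (simp add: p_def)
  define a where "a = p / C^2"
  have a0: "0 \<le> a" using p1 by (simp add: a_def)
  have aN: "a / Nr < 1/2"
  proof -
    have "a / Nr = p / (Nr * C^2)" by (simp add: a_def)
    also have "\<dots> < (Nr * C^2 / 2) / (Nr * C^2)"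
      by (rule divide_strict_right_mono[OF pN]) (use Np Cp in simp)
    also have "\<dots> = 1/2" using Np Cp by simp
    finally show ?thesis .
  qed
  define K where "K = (1 / sqrt (1 - 2*(a / Nr)))^DIM('a)"
  have K0: "0 < K"
  proof -
    have "0 < 1 - 2*(a / Nr)" using aN by linarith
    then have "0 < 1 / sqrt (1 - 2*(a / Nr))" by simp
    then show ?thesis unfolding K_def by (rule zero_less_power)
  qed
  define Y where "Y = (\<lambda>n \<omega>. \<Sum>j\<in>{1..n}. (1 / sqrt (real n)) *\<^sub>R X j \<omega>)"
  have Ym[measurable]: "Y n \<in> borel_measurable M" for n unfolding Y_def by measurable
  have kb: "(\<integral>\<^sup>+\<omega>. ennreal (exp (a * (norm (Y n \<omega>))\<^sup>2)) \<partial>M) \<le> ennreal K" for n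
    unfolding Y_def K_def Nr_def
    by (rule key_bound[OF assms(1) assms(2) assms(3) a0]) (use aN in \<open>simp add: Nr_def\<close>)
  have as: "a * s = p * (s / C^2)" for s using Cp by (simp add: a_def)
  have fle: "(norm (Y n \<omega>))\<^sup>2 / C\<^sup>2 \<le> a * (norm (Y n \<omega>))\<^sup>2" for n \<omega>
  proof -
    define t where "t = (norm (Y n \<omega>))\<^sup>2 / C\<^sup>2"
    have t0: "0 \<le> t" by (simp add: t_def)
    have "1 * t \<le> p * t" by (rule mult_right_mono) (use p1 t0 in auto)
    then show ?thesis by (simp add: as t_def)
  qed
  have int: "integrable M (\<lambda>\<omega>. exp ((norm (Y n \<omega>))\<^sup>2 / C\<^sup>2))" for n
  proof (rule integrableI_bounded)
    show "(\<lambda>\<omega>. exp ((norm (Y n \<omega>))\<^sup>2 / C\<^sup>2)) \<in> borel_measurable M" by measurable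
    have "(\<integral>\<^sup>+\<omega>. ennreal (norm (exp ((norm (Y n \<omega>))\<^sup>2 / C\<^sup>2))) \<partial>M) \<le> (\<integral>\<^sup>+\<omega>. ennreal (exp (a * (norm (Y n \<omega>))\<^sup>2)) \<partial>M)"
      by (intro nn_integral_mono ennreal_leI) (simp add: fle)
    also have "\<dots> \<le> ennreal K" by (rule kb)
    finally have "(\<integral>\<^sup>+\<omega>. ennreal (norm (exp ((norm (Y n \<omega>))\<^sup>2 / C\<^sup>2))) \<partial>M) \<le> ennreal K" .
    then show "(\<integral>\<^sup>+\<omega>. ennreal (norm (exp ((norm (Y n \<omega>))\<^sup>2 / C\<^sup>2))) \<partial>M) < \<infinity>"
      using ennreal_less_top[of K] unfolding infinity_ennreal_def by (rule le_less_trans)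
  qed
  have tail: "\<exists>K'. \<forall>n. (\<integral>\<^sup>+ x. ennreal (indicator {y. K' < \<bar>exp ((norm (Y n y))\<^sup>2 / C\<^sup>2)\<bar>} x * \<bar>exp ((norm (Y n x))\<^sup>2 / C\<^sup>2)\<bar>) \<partial>M) < ennreal e"
    if e: "e > 0" for e
  proof -
    define L where "L = (\<bar>ln (K / e)\<bar> + 1) / (p - 1)"
    have pL: "(p - 1) * L = \<bar>ln (K / e)\<bar> + 1" using p1 by (simp add: L_def)
    have small: "exp (- ((p - 1) * L)) * K < e"
    proof -
      have lt: "ln (K / e) < (p - 1) * L" unfolding pL by simp
      have "K / e = exp (ln (K / e))" using K0 e by simp
      also have "\<dots> < exp ((p - 1) * L)" using lt by simp
      finally have "K / e < exp ((p - 1) * L)" .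
      then have hK: "K < e * exp ((p - 1) * L)" using e by (simp add: field_simps)
      have E: "0 < exp ((p - 1) * L)" by simp
      have "exp (- ((p - 1) * L)) * K = K / exp ((p - 1) * L)" by (simp add: exp_minus divide_inverse mult.commute)
      also have "\<dots> < e" using hK E by (simp add: divide_less_eq)
      finally show ?thesis .
    qed
    show ?thesis
    proof (intro exI allI)
      fix n
      have pt: "ennreal (indicator {y. exp L < \<bar>exp ((norm (Y n y))\<^sup>2 / C\<^sup>2)\<bar>} \<omega> * \<bar>exp ((norm (Y n \<omega>))\<^sup>2 / C\<^sup>2)\<bar>)
          \<le> ennreal (exp (- ((p - 1) * L))) * ennreal (exp (a * (norm (Y n \<omega>))\<^sup>2))" for \<omega>
      proof (cases "exp L < exp ((norm (Y n \<omega>))\<^sup>2 / C\<^sup>2)")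
        case True
        let ?s = "(norm (Y n \<omega>))\<^sup>2 / C\<^sup>2"
        have Ls: "L < ?s" using True by simp
        have "?s = a * (norm (Y n \<omega>))\<^sup>2 - (p - 1) * ?s" using Cp by (simp add: as field_simps)
        also have "\<dots> \<le> a * (norm (Y n \<omega>))\<^sup>2 - (p - 1) * L"
        proof -
          have "(p - 1) * L \<le> (p - 1) * ?s" using Ls p1 by (intro mult_left_mono) auto
          then show ?thesis by linarith
        qed
        finally have "exp ?s \<le> exp (- ((p - 1) * L)) * exp (a * (norm (Y n \<omega>))\<^sup>2)"
          by (simp add: exp_add[symmetric])
        then show ?thesis using True by (simp add: ennreal_mult[symmetric])
      next
        case False
        then show ?thesis by simp
      qed
      have "(\<integral>\<^sup>+ x. ennreal (indicator {y. exp L < \<bar>exp ((norm (Y n y))\<^sup>2 / C\<^sup>2)\<bar>} x * \<bar>exp ((norm (Y n x))\<^sup>2 / C\<^sup>2)\<bar>) \<partial>M)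
          \<le> (\<integral>\<^sup>+ x. ennreal (exp (- ((p - 1) * L))) * ennreal (exp (a * (norm (Y n x))\<^sup>2)) \<partial>M)"
        by (rule nn_integral_mono) (rule pt)
      also have "\<dots> = ennreal (exp (- ((p - 1) * L))) * (\<integral>\<^sup>+ x. ennreal (exp (a * (norm (Y n x))\<^sup>2)) \<partial>M)"
        by (rule nn_integral_cmult) measurable
      also have "\<dots> \<le> ennreal (exp (- ((p - 1) * L))) * ennreal K"
        by (intro mult_left_mono kb) simp
      also have "\<dots> = ennreal (exp (- ((p - 1) * L)) * K)" using K0 by (simp add: ennreal_mult)
      also have "\<dots> < ennreal e" using small e K0 by (simp add: ennreal_lessI)
      finally show "(\<integral>\<^sup>+ x. ennreal (indicator {y. exp L < \<bar>exp ((norm (Y n y))\<^sup>2 / C\<^sup>2)\<bar>} x * \<bar>exp ((norm (Y n x))\<^sup>2 / C\<^sup>2)\<bar>) \<partial>M) < ennreal e" .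
    qed
  qed
  show ?thesis
    unfolding uniformly_integrable_def
    using int tail unfolding Y_def by blast
qed

end
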